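(* Let $A, B \in \mathbb{R}^{n\times n}_+$ be entrywise nonnegative Schur-stable matrices. Let $\mathcal{D}_{A,B}$ denote the set of diagonal matrices $D\in\mathbb{R}^{n\times n}$ with nonnegative diagonal entries such that $A-D$ and $B-D$ are both entrywise nonnegative. For $D\in\mathcal{D}_{A,B}$ let $$M=\begin{pmatrix} A-D & D\\ D & B-D\end{pmatrix}\in\mathbb{R}^{2n\times 2n}.$$ Consider the statements: (i) there exists a diagonal matrix $E\succ 0$ with $A^TEA-E\prec 0$ and $B^TEB-E\prec 0$; (ii) there exists a diagonal matrix $E\succ 0$ with $(A-I)^TE+E(A-I)\prec 0$ and $(B-I)^TE+E(B-I)\prec 0$; (iii) for every $D\in\mathcal{D}_{A,B}$, the matrix $M$ is Schur-stable. Then (i) $\Rightarrow$ (ii) $\Rightarrow$ (iii).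
   Context: A real square matrix is Schur-stable if its spectral radius is strictly less than $1$. For a symmetric matrix $P$, $P\succ 0$ ($P\prec 0$) means $P$ is positive (negative) definite. $\mathbb{R}^{n\times n}_+$ denotes the set of entrywise nonnegative $n\times n$ real matrices. *)

theory Defs
  imports "Jordan_Normal_Form.Spectral_Radius"
begin

definition schur_stable :: "real mat \<Rightarrow> bool" where
  "schur_stable A \<longleftrightarrow> square_mat A \<and> spectral_radius (map_mat complex_of_real A) < 1"

definition nonneg_mat :: "real mat \<Rightarrow> bool" where
  "nonneg_mat A \<longleftrightarrow> (\<forall>i < dim_row A. \<forall>j < dim_col A. A $$ (i,j) \<ge> 0)"

definition pos_def_mat :: "real mat \<Rightarrow> bool" where
  "pos_def_mat P \<longleftrightarrow> square_mat P \<and> P\<^sup>T = P \<and>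
     (\<forall>x \<in> carrier_vec (dim_row P). x \<noteq> 0\<^sub>v (dim_row P) \<longrightarrow> x \<bullet> (P *\<^sub>v x) > 0)"

definition neg_def_mat :: "real mat \<Rightarrow> bool" where
  "neg_def_mat P \<longleftrightarrow> square_mat P \<and> P\<^sup>T = P \<and>
     (\<forall>x \<in> carrier_vec (dim_row P). x \<noteq> 0\<^sub>v (dim_row P) \<longrightarrow> x \<bullet> (P *\<^sub>v x) < 0)"

definition DAB :: "nat \<Rightarrow> real mat \<Rightarrow> real mat \<Rightarrow> real mat set" where
  "DAB n A B = {D. D \<in> carrier_mat n n \<and> diagonal_mat D \<and> (\<forall>i<n. D $$ (i,i) \<ge> 0)
                   \<and> nonneg_mat (A - D) \<and> nonneg_mat (B - D)}"

end

theory Submission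
  imports Defs
begin

lemma key_schur:
  fixes N :: "real mat"
  assumes N: "N \<in> carrier_mat m m" and m: "m>0" and nn: "\<forall>i<m. \<forall>j<m. N$$(i,j) \<ge> 0"
  and f: "\<forall>i<m. f i > 0"
  and q: "\<forall>x\<in>carrier_vec m. x \<noteq> 0\<^sub>v m \<longrightarrow> (\<Sum>i\<in>{0..<m}. f i * x$i * (N *\<^sub>v x)$i) < (\<Sum>i\<in>{0..<m}. f i * x$i * x$i)"
  shows "schur_stable N"
proof -
  let ?C = "map_mat complex_of_real N"
  have C: "?C \<in> carrier_mat m m" using N by simp
  from spectral_radius_mem_max(1)[OF C m] obtain l where l: "l \<in> spectrum ?C" and sr: "spectral_radius ?C = cmod l" by auto
  from l obtain z where ev: "eigenvector ?C z l" unfolding spectrum_def eigenvalue_def by auto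
  hence z: "z \<in> carrier_vec m" "z \<noteq> 0\<^sub>v m" "?C *\<^sub>v z = l \<cdot>\<^sub>v z" unfolding eigenvector_def using C by auto
  define w where "w = vec m (\<lambda>i. cmod (z$i))"
  have w: "w \<in> carrier_vec m" unfolding w_def by simp
  have wnz: "w \<noteq> 0\<^sub>v m"
  proof
    assume "w = 0\<^sub>v m"
    hence "\<forall>i<m. z$i = 0" unfolding w_def by (metis index_vec index_zero_vec(1) norm_eq_zero) 
    hence "z = 0\<^sub>v m" using z(1) by (intro eq_vecI) auto
    with z(2) show False by simp
  qed
  have ineq: "cmod l * w$i \<le> (N *\<^sub>v w)$i" if i: "i<m" for i
  proof -
    have "cmod l * w$i = cmod ((l \<cdot>\<^sub>v z)$i)" using i z(1) w_def by (simp add: norm_mult)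
    also have "\<dots> = cmod ((?C *\<^sub>v z)$i)" using z(3) by simp
    also have "(?C *\<^sub>v z)$i = (\<Sum>j\<in>{0..<m}. complex_of_real (N$$(i,j)) * z$j)" 
      using i N z(1) by (simp add: mult_mat_vec_def scalar_prod_def)
    also have "cmod \<dots> \<le> (\<Sum>j\<in>{0..<m}. N$$(i,j) * cmod (z$j))"
      by (rule order.trans[OF norm_sum], rule sum_mono, insert nn i, auto simp: norm_mult)
    also have "\<dots> = (N *\<^sub>v w)$i" using i N w_def by (simp add: mult_mat_vec_def scalar_prod_def)
    finally show ?thesis .
  qed
  from q w wnz have lt: "(\<Sum>i\<in>{0..<m}. f i * w$i * (N *\<^sub>v w)$i) < (\<Sum>i\<in>{0..<m}. f i * w$i * w$i)" by auto
  have "(\<Sum>i\<in>{0..<m}. f i * w$i * (cmod l * w$i)) \<le> (\<Sum>i\<in>{0..<m}. f i * w$i * (N *\<^sub>v w)$i)"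
  proof (rule sum_mono)
    fix i assume "i \<in> {0..<m}"
    hence i: "i < m" by auto
    have "0 \<le> f i * w$i" using f i w_def by auto
    from ineq[OF i] this show "f i * w$i * (cmod l * w$i) \<le> f i * w$i * (N *\<^sub>v w)$i" by (rule mult_left_mono)
  qed
  also have "(\<Sum>i\<in>{0..<m}. f i * w$i * (cmod l * w$i)) = cmod l * (\<Sum>i\<in>{0..<m}. f i * w$i * w$i)"
    by (simp add: sum_distrib_left algebra_simps)
  finally have lt2: "cmod l * (\<Sum>i\<in>{0..<m}. f i * w$i * w$i) < (\<Sum>i\<in>{0..<m}. f i * w$i * w$i)" using lt by simp
  have "0 \<le> (\<Sum>i\<in>{0..<m}. f i * w$i * w$i)" using f w_def by (intro sum_nonneg) auto
  note S0 = this
  have "cmod l < 1"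
  proof (rule ccontr)
    assume "\<not> cmod l < 1"
    hence "1 \<le> cmod l" by simp
    from mult_right_mono[OF this S0] lt2 show False by simp
  qed
  thus ?thesis unfolding schur_stable_def using N sr by simp
qed

lemma diag_mult_vec:
  fixes D :: "real mat"
  assumes D: "D \<in> carrier_mat n n" and dg: "diagonal_mat D" and u: "u \<in> carrier_vec n" and i: "i < n"
  shows "(D *\<^sub>v u)$i = D$$(i,i) * u$i"
proof -
  have "(D *\<^sub>v u)$i = (\<Sum>j\<in>{0..<n}. D$$(i,j) * u$j)" using D u i by (simp add: mult_mat_vec_def scalar_prod_def)
  also have "\<dots> = (\<Sum>j\<in>{0..<n}. if j = i then D$$(i,i) * u$i else 0)"
    by (rule sum.cong, insert dg D i, auto simp: diagonal_mat_def)
  also have "\<dots> = D$$(i,i) * u$i" using i by simp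
  finally show ?thesis .
qed

lemma diag_quad:
  fixes E :: "real mat"
  assumes E: "E \<in> carrier_mat n n" and dg: "diagonal_mat E" and x: "x \<in> carrier_vec n" and y: "y \<in> carrier_vec n"
  shows "(E *\<^sub>v x) \<bullet> y = (\<Sum>i\<in>{0..<n}. E$$(i,i) * x$i * y$i)"
proof -
  have "\<And>i. i<n \<Longrightarrow> (E *\<^sub>v x)$i * y$i = E$$(i,i)*x$i*y$i" using diag_mult_vec[OF E dg x] by simp
  then show ?thesis unfolding scalar_prod_def using y by (auto intro: sum.cong)
qed

lemma pos_def_diag:
  fixes E :: "real mat"
  assumes E: "E \<in> carrier_mat n n" and dg: "diagonal_mat E" and pd: "pos_def_mat E" and i: "i < n"
  shows "E$$(i,i) > 0"
proof -
  have u: "unit_vec n i \<in> carrier_vec n" "unit_vec n i \<noteq> 0\<^sub>v n" using i by auto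
  hence "unit_vec n i \<bullet> (E *\<^sub>v unit_vec n i) > 0" using pd E unfolding pos_def_mat_def by auto
  also have "unit_vec n i \<bullet> (E *\<^sub>v unit_vec n i) = (E *\<^sub>v unit_vec n i) $ i"
    using i E by simp
  also have "\<dots> = E$$(i,i)" using diag_mult_vec[OF E dg u(1) i] i by simp
  finally show ?thesis .
qed

lemma sym_scalar:
  fixes E :: "real mat"
  assumes E: "E \<in> carrier_mat n n" and sym: "E\<^sup>T = E" and x: "x \<in> carrier_vec n" and y: "y \<in> carrier_vec n"
  shows "x \<bullet> (E *\<^sub>v y) = (E *\<^sub>v x) \<bullet> y"
  using transpose_vec_mult_scalar[OF E y x] sym by simp

lemma Q1:
  fixes E P :: "real mat"
  assumes E: "E \<in> carrier_mat n n" and sym: "E\<^sup>T = E" and P: "P \<in> carrier_mat n n" and x: "x \<in> carrier_vec n"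
  shows "x \<bullet> ((P\<^sup>T * E + E * P) *\<^sub>v x) = 2 * ((E *\<^sub>v x) \<bullet> (P *\<^sub>v x))"
proof -
  have "(P\<^sup>T * E + E * P) *\<^sub>v x = P\<^sup>T *\<^sub>v (E *\<^sub>v x) + E *\<^sub>v (P *\<^sub>v x)"
    using E P x by (simp add: add_mult_distrib_mat_vec[of _ n n])
  hence "x \<bullet> ((P\<^sup>T * E + E * P) *\<^sub>v x) = x \<bullet> (P\<^sup>T *\<^sub>v (E *\<^sub>v x)) + x \<bullet> (E *\<^sub>v (P *\<^sub>v x))"
    using E P x by (simp add: scalar_prod_add_distrib[of _ n])
  also have "x \<bullet> (P\<^sup>T *\<^sub>v (E *\<^sub>v x)) = (P\<^sup>T *\<^sub>v (E *\<^sub>v x)) \<bullet> x"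
    using E P x by (intro comm_scalar_prod[of _ n]) auto
  also have "\<dots> = (E *\<^sub>v x) \<bullet> (P *\<^sub>v x)" using transpose_vec_mult_scalar[OF P x, of "E *\<^sub>v x"] E x by simp
  also have "x \<bullet> (E *\<^sub>v (P *\<^sub>v x)) = (E *\<^sub>v x) \<bullet> (P *\<^sub>v x)" using sym_scalar[OF E sym x, of "P *\<^sub>v x"] P x by simp
  finally show ?thesis by simp
qed

lemma Q2:
  fixes E A :: "real mat"
  assumes E: "E \<in> carrier_mat n n" and A: "A \<in> carrier_mat n n" and x: "x \<in> carrier_vec n"
  shows "x \<bullet> ((A\<^sup>T * E * A - E) *\<^sub>v x) = (A *\<^sub>v x) \<bullet> (E *\<^sub>v (A *\<^sub>v x)) - x \<bullet> (E *\<^sub>v x)"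
proof -
  have "(A\<^sup>T * E * A - E) *\<^sub>v x = A\<^sup>T *\<^sub>v (E *\<^sub>v (A *\<^sub>v x)) - E *\<^sub>v x"
    using E A x assoc_mult_mat_vec[of "A\<^sup>T" n n "E*A" n x] assoc_mult_mat_vec[OF E A x]
    by (simp add: minus_mult_distrib_mat_vec[of _ n n])
  hence "x \<bullet> ((A\<^sup>T * E * A - E) *\<^sub>v x) = x \<bullet> (A\<^sup>T *\<^sub>v (E *\<^sub>v (A *\<^sub>v x))) - x \<bullet> (E *\<^sub>v x)"
    using E A x by (simp add: scalar_prod_minus_distrib[of _ n])
  also have "x \<bullet> (A\<^sup>T *\<^sub>v (E *\<^sub>v (A *\<^sub>v x))) = (A\<^sup>T *\<^sub>v (E *\<^sub>v (A *\<^sub>v x))) \<bullet> x"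
    using E A x by (intro comm_scalar_prod[of _ n]) auto
  also have "\<dots> = (E *\<^sub>v (A *\<^sub>v x)) \<bullet> (A *\<^sub>v x)" using transpose_vec_mult_scalar[OF A x, of "E *\<^sub>v (A *\<^sub>v x)"] E A x by simp
  also have "\<dots> = (A *\<^sub>v x) \<bullet> (E *\<^sub>v (A *\<^sub>v x))" using E A x by (intro comm_scalar_prod[of _ n]) auto
  finally show ?thesis .
qed

lemma one_minus_vec:
  fixes A :: "real mat"
  assumes A: "A \<in> carrier_mat n n" and x: "x \<in> carrier_vec n"
  shows "(A - 1\<^sub>m n) *\<^sub>v x = A *\<^sub>v x - x"
  using A x by (simp add: minus_mult_distrib_mat_vec[of _ n n])

lemma step1:
  fixes A E :: "real mat"
  assumes A: "A \<in> carrier_mat n n" and E: "E \<in> carrier_mat n n" and pd: "pos_def_mat E"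
    and nd: "neg_def_mat (A\<^sup>T * E * A - E)"
  shows "neg_def_mat ((A - 1\<^sub>m n)\<^sup>T * E + E * (A - 1\<^sub>m n))"
proof -
  define P where "P = A - 1\<^sub>m n"
  have P: "P \<in> carrier_mat n n" using A unfolding P_def by (simp add: minus_carrier_mat)
  have sym: "E\<^sup>T = E" using pd unfolding pos_def_mat_def by auto
  have PT: "P\<^sup>T \<in> carrier_mat n n" using P by simp
  have tr: "(P\<^sup>T * E + E * P)\<^sup>T = P\<^sup>T * E + E * P"
  proof -
    have "(P\<^sup>T * E + E * P)\<^sup>T = (P\<^sup>T * E)\<^sup>T + (E * P)\<^sup>T"
      using P E by (intro transpose_add[of _ n n]) auto
    also have "(P\<^sup>T * E)\<^sup>T = E\<^sup>T * P" using transpose_mult[OF PT E] by simp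
    also have "(E * P)\<^sup>T = P\<^sup>T * E\<^sup>T" using transpose_mult[OF E P] by simp
    finally show ?thesis using sym P E by (simp add: comm_add_mat[of _ n n])
  qed
  have quad: "x \<bullet> ((P\<^sup>T * E + E * P) *\<^sub>v x) < 0" if x: "x \<in> carrier_vec n" "x \<noteq> 0\<^sub>v n" for x
  proof -
    define y where "y = A *\<^sub>v x"
    have y: "y \<in> carrier_vec n" using A x unfolding y_def by simp
    have "x \<bullet> ((A\<^sup>T * E * A - E) *\<^sub>v x) < 0" using nd x A E unfolding neg_def_mat_def by auto
    hence c: "y \<bullet> (E *\<^sub>v y) - x \<bullet> (E *\<^sub>v x) < 0" using Q2[OF E A x(1)] y_def by simp
    have xy: "x - y \<in> carrier_vec n" using x y by simp
    have ge: "(x - y) \<bullet> (E *\<^sub>v (x - y)) \<ge> 0"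
    proof (cases "x - y = 0\<^sub>v n")
      case True then show ?thesis using E by simp
    next
      case False then show ?thesis using pd xy E unfolding pos_def_mat_def by fastforce
    qed
    have "E *\<^sub>v (x - y) = E *\<^sub>v x - E *\<^sub>v y" using E x y by (simp add: mult_minus_distrib_mat_vec)
    hence "(x - y) \<bullet> (E *\<^sub>v (x - y)) = x \<bullet> (E *\<^sub>v x - E *\<^sub>v y) - y \<bullet> (E *\<^sub>v x - E *\<^sub>v y)"
      using E x y by (simp add: minus_scalar_prod_distrib[of _ n])
    also have "\<dots> = x \<bullet> (E *\<^sub>v x) - x \<bullet> (E *\<^sub>v y) - (y \<bullet> (E *\<^sub>v x) - y \<bullet> (E *\<^sub>v y))"
      using E x y by (simp add: scalar_prod_minus_distrib[of _ n])
    finally have e1: "(x - y) \<bullet> (E *\<^sub>v (x - y)) = x \<bullet> (E *\<^sub>v x) - x \<bullet> (E *\<^sub>v y) - (y \<bullet> (E *\<^sub>v x) - y \<bullet> (E *\<^sub>v y))" .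
    have s1: "x \<bullet> (E *\<^sub>v y) = (E *\<^sub>v x) \<bullet> y" by (rule sym_scalar[OF E sym x(1) y])
    have s2: "y \<bullet> (E *\<^sub>v x) = (E *\<^sub>v x) \<bullet> y" using E x y by (intro comm_scalar_prod[of _ n]) auto
    have s3: "x \<bullet> (E *\<^sub>v x) = (E *\<^sub>v x) \<bullet> x" using E x y by (intro comm_scalar_prod[of _ n]) auto
    have "(E *\<^sub>v x) \<bullet> (P *\<^sub>v x) = (E *\<^sub>v x) \<bullet> y - (E *\<^sub>v x) \<bullet> x"
      using one_minus_vec[OF A x(1)] P_def y_def E x y by (simp add: scalar_prod_minus_distrib[of _ n])
    hence "(E *\<^sub>v x) \<bullet> (P *\<^sub>v x) < 0" using ge e1 s1 s2 s3 c by linarith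
    thus ?thesis using Q1[OF E sym P x(1)] by simp
  qed
  show ?thesis unfolding neg_def_mat_def P_def[symmetric] using tr quad P E by auto
qed

lemma step2:
  fixes A E :: "real mat"
  assumes A: "A \<in> carrier_mat n n" and E: "E \<in> carrier_mat n n" and dg: "diagonal_mat E" and pd: "pos_def_mat E"
    and nd: "neg_def_mat ((A - 1\<^sub>m n)\<^sup>T * E + E * (A - 1\<^sub>m n))" and u: "u \<in> carrier_vec n"
  shows "(\<Sum>i\<in>{0..<n}. E$$(i,i) * u$i * (A *\<^sub>v u)$i) \<le> (\<Sum>i\<in>{0..<n}. E$$(i,i) * u$i * u$i)"
    and "u \<noteq> 0\<^sub>v n \<Longrightarrow> (\<Sum>i\<in>{0..<n}. E$$(i,i) * u$i * (A *\<^sub>v u)$i) < (\<Sum>i\<in>{0..<n}. E$$(i,i) * u$i * u$i)"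
proof -
  have sym: "E\<^sup>T = E" using pd unfolding pos_def_mat_def by auto
  have P: "A - 1\<^sub>m n \<in> carrier_mat n n" using A by (simp add: minus_carrier_mat)
  have eq: "u \<bullet> (((A - 1\<^sub>m n)\<^sup>T * E + E * (A - 1\<^sub>m n)) *\<^sub>v u) =
     2 * ((\<Sum>i\<in>{0..<n}. E$$(i,i) * u$i * (A *\<^sub>v u)$i) - (\<Sum>i\<in>{0..<n}. E$$(i,i) * u$i * u$i))"
    using Q1[OF E sym P u] one_minus_vec[OF A u] A E u
    by (simp add: scalar_prod_minus_distrib[of _ n] diag_quad[OF E dg u])
  show "u \<noteq> 0\<^sub>v n \<Longrightarrow> (\<Sum>i\<in>{0..<n}. E$$(i,i) * u$i * (A *\<^sub>v u)$i) < (\<Sum>i\<in>{0..<n}. E$$(i,i) * u$i * u$i)"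
    using nd u P E eq unfolding neg_def_mat_def by auto
  show "(\<Sum>i\<in>{0..<n}. E$$(i,i) * u$i * (A *\<^sub>v u)$i) \<le> (\<Sum>i\<in>{0..<n}. E$$(i,i) * u$i * u$i)"
  proof (cases "u = 0\<^sub>v n")
    case True then show ?thesis using A by (simp add: minus_carrier_mat)
  next
    case False then show ?thesis using nd u P E eq unfolding neg_def_mat_def by fastforce
  qed
qed

lemma sum_split2: fixes n m :: nat shows "(\<Sum>i\<in>{0..<n+m}. g i) = (\<Sum>i\<in>{0..<n}. (g i::real)) + (\<Sum>i\<in>{0..<m}. g (n+i))"
  by (induct m) auto

lemma step3:
  fixes A B E D :: "real mat"
  assumes A: "A \<in> carrier_mat n n" and B: "B \<in> carrier_mat n n" and E: "E \<in> carrier_mat n n"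
    and dg: "diagonal_mat E" and pd: "pos_def_mat E"
    and ndA: "neg_def_mat ((A - 1\<^sub>m n)\<^sup>T * E + E * (A - 1\<^sub>m n))"
    and ndB: "neg_def_mat ((B - 1\<^sub>m n)\<^sup>T * E + E * (B - 1\<^sub>m n))"
    and DD: "D \<in> DAB n A B" and n: "n > 0"
  shows "schur_stable (four_block_mat (A - D) D D (B - D))"
proof -
  from DD have D: "D \<in> carrier_mat n n" and dgD: "diagonal_mat D" and Dpos: "\<forall>i<n. D$$(i,i) \<ge> 0"
    and nnA: "nonneg_mat (A - D)" and nnB: "nonneg_mat (B - D)" unfolding DAB_def by auto
  have AD: "A - D \<in> carrier_mat n n" and BD: "B - D \<in> carrier_mat n n" using D by (auto simp: minus_carrier_mat)
  define N where "N = four_block_mat (A - D) D D (B - D)"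
  have N: "N \<in> carrier_mat (n+n) (n+n)" unfolding N_def using AD BD by simp
  have Dent: "D$$(i,j) \<ge> 0" if "i<n" "j<n" for i j
    using dgD D Dpos that unfolding diagonal_mat_def by (cases "i = j") auto
  have nn: "\<forall>i<n+n. \<forall>j<n+n. N$$(i,j) \<ge> 0"
  proof (intro allI impI)
    fix i j assume i: "i < n+n" and j: "j < n+n"
    have dims: "dim_row (A - D) = n" "dim_col (A - D) = n" "dim_row (B - D) = n" "dim_col (B - D) = n"
      using AD BD by auto
    have e: "N$$(i,j) = (if i < n then if j < n then (A - D) $$ (i,j) else D $$ (i,j - n)
      else if j < n then D $$ (i - n, j) else (B - D) $$ (i - n, j - n))"
      unfolding N_def using i j dims by (subst index_mat_four_block(1)) auto
    show "N$$(i,j) \<ge> 0" unfolding e using i j dims nnA nnB Dent unfolding nonneg_mat_def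
      by auto
  qed
  define e where "e = (\<lambda>i. E$$(i,i))"
  define d where "d = (\<lambda>i. D$$(i,i))"
  define f where "f = (\<lambda>i. if i < n then e i else e (i - n))"
  have epos: "\<forall>i<n. e i > 0" using pos_def_diag[OF E dg pd] unfolding e_def by auto
  have fpos: "\<forall>i<n+n. f i > 0" using epos unfolding f_def by auto
  have q: "\<forall>x\<in>carrier_vec (n+n). x \<noteq> 0\<^sub>v (n+n) \<longrightarrow> (\<Sum>i\<in>{0..<n+n}. f i * x$i * (N *\<^sub>v x)$i) < (\<Sum>i\<in>{0..<n+n}. f i * x$i * x$i)"
  proof (intro ballI impI)
    fix x :: "real vec" assume x: "x \<in> carrier_vec (n+n)" and xnz: "x \<noteq> 0\<^sub>v (n+n)"
    define u where "u = vec n (\<lambda>i. x$i)"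
    define v where "v = vec n (\<lambda>i. x$(n+i))"
    have u: "u \<in> carrier_vec n" and v: "v \<in> carrier_vec n" unfolding u_def v_def by auto
    have xuv: "x = u @\<^sub>v v" using x unfolding u_def v_def by (intro eq_vecI) auto
    have Nx: "N *\<^sub>v x = ((A - D) *\<^sub>v u + D *\<^sub>v v) @\<^sub>v (D *\<^sub>v u + (B - D) *\<^sub>v v)"
      unfolding N_def xuv by (rule four_block_mat_mult_vec[OF AD D D BD u v])
    have ADu: "((A - D) *\<^sub>v u) $ i = (A *\<^sub>v u)$i - d i * u$i" if "i<n" for i
      using that A D u diag_mult_vec[OF D dgD u that] unfolding d_def by (simp add: minus_mult_distrib_mat_vec[of _ n n])
    have BDv: "((B - D) *\<^sub>v v) $ i = (B *\<^sub>v v)$i - d i * v$i" if "i<n" for i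
      using that B D v diag_mult_vec[OF D dgD v that] unfolding d_def by (simp add: minus_mult_distrib_mat_vec[of _ n n])
    have Dv: "(D *\<^sub>v v)$i = d i * v$i" "(D *\<^sub>v u)$i = d i * u$i" if "i<n" for i
      using diag_mult_vec[OF D dgD v that] diag_mult_vec[OF D dgD u that] unfolding d_def by auto
    have n1: "(N *\<^sub>v x)$i = (A *\<^sub>v u)$i - d i * u$i + d i * v$i" if "i<n" for i
      unfolding Nx using that ADu[OF that] Dv[OF that] AD D u v by simp
    have n2: "(N *\<^sub>v x)$(n+i) = d i * u$i + ((B *\<^sub>v v)$i - d i * v$i)" if "i<n" for i
      unfolding Nx using that BDv[OF that] Dv[OF that] BD D u v by simp
    have x1: "x$i = u$i" "x$(n+i) = v$i" if "i<n" for i using that unfolding u_def v_def by auto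
    have "(\<Sum>i\<in>{0..<n+n}. f i * x$i * (N *\<^sub>v x)$i) =
      (\<Sum>i\<in>{0..<n}. e i * u$i * (A *\<^sub>v u)$i + e i * v$i * (B *\<^sub>v v)$i - e i * d i * (u$i - v$i)^2)"
      unfolding sum_split2 sum.distrib[symmetric]
    proof (rule sum.cong)
      fix i assume "i \<in> {0..<n}"
      hence i: "i < n" by simp
      have fi: "f i = e i" "f (n+i) = e i" using i unfolding f_def by auto
      show "f i * x$i * (N *\<^sub>v x)$i + f (n+i) * x$(n+i) * (N *\<^sub>v x)$(n+i) =
        e i * u$i * (A *\<^sub>v u)$i + e i * v$i * (B *\<^sub>v v)$i - e i * d i * (u$i - v$i)^2"
        unfolding fi n1[OF i] n2[OF i] x1[OF i] by (simp add: power2_eq_square algebra_simps)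
    qed simp
    also have "\<dots> = (\<Sum>i\<in>{0..<n}. e i * u$i * (A *\<^sub>v u)$i) + (\<Sum>i\<in>{0..<n}. e i * v$i * (B *\<^sub>v v)$i)
        - (\<Sum>i\<in>{0..<n}. e i * d i * (u$i - v$i)^2)"
      by (simp add: sum.distrib sum_subtractf)
    finally have L: "(\<Sum>i\<in>{0..<n+n}. f i * x$i * (N *\<^sub>v x)$i) = \<dots>" .
    have R: "(\<Sum>i\<in>{0..<n+n}. f i * x$i * x$i) = (\<Sum>i\<in>{0..<n}. e i * u$i * u$i) + (\<Sum>i\<in>{0..<n}. e i * v$i * v$i)"
      unfolding sum_split2 by (intro arg_cong2[where f="(+)"] sum.cong) (auto simp: x1 f_def)
    have G: "(\<Sum>i\<in>{0..<n}. e i * d i * (u$i - v$i)^2) \<ge> 0"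
      using epos Dpos unfolding d_def by (intro sum_nonneg mult_nonneg_nonneg) (auto simp: less_imp_le)
    note sA = step2[OF A E dg pd ndA u]
    note sB = step2[OF B E dg pd ndB v]
    have "u \<noteq> 0\<^sub>v n \<or> v \<noteq> 0\<^sub>v n" using xnz xuv by auto
    thus "(\<Sum>i\<in>{0..<n+n}. f i * x$i * (N *\<^sub>v x)$i) < (\<Sum>i\<in>{0..<n+n}. f i * x$i * x$i)"
    proof (elim disjE)
      assume "u \<noteq> 0\<^sub>v n"
      with sA(2) have "(\<Sum>i\<in>{0..<n}. e i * u$i * (A *\<^sub>v u)$i) < (\<Sum>i\<in>{0..<n}. e i * u$i * u$i)" unfolding e_def by simp
      with sB(1) G show ?thesis unfolding L R unfolding e_def by simp
    next
      assume "v \<noteq> 0\<^sub>v n"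
      with sB(2) have "(\<Sum>i\<in>{0..<n}. e i * v$i * (B *\<^sub>v v)$i) < (\<Sum>i\<in>{0..<n}. e i * v$i * v$i)" unfolding e_def by simp
      with sA(1) G show ?thesis unfolding L R unfolding e_def by simp
    qed
  qed
  have "schur_stable N" using key_schur[OF N _ nn fpos q] n by simp
  thus ?thesis unfolding N_def .
qed

theorem theorem2:
  fixes A B :: "real mat" and n :: nat
  assumes A: "A \<in> carrier_mat n n" and B: "B \<in> carrier_mat n n"
    and A_nonneg: "nonneg_mat A" and B_nonneg: "nonneg_mat B"
    and A_stable: "schur_stable A" and B_stable: "schur_stable B"
  shows "((\<exists>E \<in> carrier_mat n n. diagonal_mat E \<and> pos_def_mat E \<and>
              neg_def_mat (A\<^sup>T * E * A - E) \<and> neg_def_mat (B\<^sup>T * E * B - E))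
          \<longrightarrow> (\<exists>E \<in> carrier_mat n n. diagonal_mat E \<and> pos_def_mat E \<and>
              neg_def_mat ((A - 1\<^sub>m n)\<^sup>T * E + E * (A - 1\<^sub>m n)) \<and>
              neg_def_mat ((B - 1\<^sub>m n)\<^sup>T * E + E * (B - 1\<^sub>m n))))
       \<and> ((\<exists>E \<in> carrier_mat n n. diagonal_mat E \<and> pos_def_mat E \<and>
              neg_def_mat ((A - 1\<^sub>m n)\<^sup>T * E + E * (A - 1\<^sub>m n)) \<and>
              neg_def_mat ((B - 1\<^sub>m n)\<^sup>T * E + E * (B - 1\<^sub>m n)))
          \<longrightarrow> (\<forall>D \<in> DAB n A B.
                 schur_stable (four_block_mat (A - D) D D (B - D))))"
proof (intro conjI impI)
  assume "\<exists>E \<in> carrier_mat n n. diagonal_mat E \<and> pos_def_mat E \<and>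
              neg_def_mat (A\<^sup>T * E * A - E) \<and> neg_def_mat (B\<^sup>T * E * B - E)"
  then obtain E where E: "E \<in> carrier_mat n n" "diagonal_mat E" "pos_def_mat E"
    "neg_def_mat (A\<^sup>T * E * A - E)" "neg_def_mat (B\<^sup>T * E * B - E)" by auto
  show "\<exists>E \<in> carrier_mat n n. diagonal_mat E \<and> pos_def_mat E \<and>
              neg_def_mat ((A - 1\<^sub>m n)\<^sup>T * E + E * (A - 1\<^sub>m n)) \<and>
              neg_def_mat ((B - 1\<^sub>m n)\<^sup>T * E + E * (B - 1\<^sub>m n))"
    using E step1[OF A E(1) E(3) E(4)] step1[OF B E(1) E(3) E(5)] by blast
next
  assume "\<exists>E \<in> carrier_mat n n. diagonal_mat E \<and> pos_def_mat E \<and>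
              neg_def_mat ((A - 1\<^sub>m n)\<^sup>T * E + E * (A - 1\<^sub>m n)) \<and>
              neg_def_mat ((B - 1\<^sub>m n)\<^sup>T * E + E * (B - 1\<^sub>m n))"
  then obtain E where E: "E \<in> carrier_mat n n" "diagonal_mat E" "pos_def_mat E"
    "neg_def_mat ((A - 1\<^sub>m n)\<^sup>T * E + E * (A - 1\<^sub>m n))"
    "neg_def_mat ((B - 1\<^sub>m n)\<^sup>T * E + E * (B - 1\<^sub>m n))" by auto
  show "\<forall>D \<in> DAB n A B. schur_stable (four_block_mat (A - D) D D (B - D))"
  proof
    fix D assume DD: "D \<in> DAB n A B"
    show "schur_stable (four_block_mat (A - D) D D (B - D))"
    proof (cases "n = 0")
      case False
      then show ?thesis using step3[OF A B E DD] by simp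
    next
      case True
      have D: "D \<in> carrier_mat n n" using DD unfolding DAB_def by auto
      have N: "four_block_mat (A - D) D D (B - D) \<in> carrier_mat 0 0"
        using True A B D by (metis four_block_carrier_mat minus_carrier_mat add_0)
      have "map_mat complex_of_real (four_block_mat (A - D) D D (B - D)) = map_mat complex_of_real A"
        using N A True by (intro eq_matI) auto
      then show ?thesis using A_stable N A D True unfolding schur_stable_def by auto
    qed
  qed
qed

end
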